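(* Let $A,B\in\mathbb{Z}$ with $-1\leq A\leq B$, $B\geq 2$ and $2A<B+3$. Let $\mathcal{S}$ be the neighbor set of $T$ and $\mathcal{S}^{\ell}$ the neighbor set of $T^{\ell}$. Then $\mathcal{S}\subset\mathcal{S}^{\ell}\cup\{c\}\cup\mathcal{S}^{\ell}c$, where $\mathcal{S}^{\ell}c=\{s\circ c: s\in\mathcal{S}^{\ell}\}$.
   Context: Let $a(x,y)=(x+1,y)$, $b(x,y)=(x,y+1)$, $c(x,y)=(-x,-y)$ and let $\Gamma=\{a^pb^qc^r: p,q\in\mathbb{Z},\ r\in\{0,1\}\}$ (products are compositions). Let $M=\begin{pmatrix}0&-B\\1&-A\end{pmatrix}$, $g(\mathbf{x})=M\mathbf{x}+\left(\frac{B-1}{2},0\right)^T$, $\mathcal{D}=\{id,a,\dots,a^{B-2},c\}$ if $B\geq3$ and $\mathcal{D}=\{id,c\}$ if $B=2$, and let $T$ be the unique nonempty compact set with $g(T)=\bigcup_{\delta\in\mathcal{D}}\delta(T)$. Let $T^{\ell}$ be the unique nonempty compact set with $MT^{\ell}=\bigcup_{k=0}^{B-1}\left(T^{\ell}+(k,0)^T\right)$. The neighbor set of $T$ is $\mathcal{S}=\{\gamma\in\Gamma\setminus\{id\}: T\cap\gamma(T)\neq\emptyset\}$; the neighbor set of $T^{\ell}$ is $\mathcal{S}^{\ell}=\{a^pb^q\neq id: T^{\ell}\cap a^pb^q(T^{\ell})\neq\emptyset\}$ (translations by nonzero integer vectors $(p,q)$). *)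

theory Defs
  imports "HOL-Analysis.Analysis"
begin

type_synonym pt = "real \<times> real"

definition amap :: "pt \<Rightarrow> pt" where "amap = (\<lambda>(x, y). (x + 1, y))"
definition bmap :: "pt \<Rightarrow> pt" where "bmap = (\<lambda>(x, y). (x, y + 1))"
definition cmap :: "pt \<Rightarrow> pt" where "cmap = (\<lambda>(x, y). (- x, - y))"

text \<open>The element a^p b^q c^r of Gamma (composition, c^r applied first).\<close>
definition gam :: "int \<Rightarrow> int \<Rightarrow> nat \<Rightarrow> pt \<Rightarrow> pt" where
  "gam p q r = (\<lambda>(x, y). if r = 0 then (x + of_int p, y + of_int q)
                                   else (- x + of_int p, - y + of_int q))"

definition Gamma :: "(pt \<Rightarrow> pt) set" where
  "Gamma = {gam p q r | p q r. r \<in> {0, 1}}"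

definition Mmul :: "int \<Rightarrow> int \<Rightarrow> pt \<Rightarrow> pt" where
  "Mmul A B = (\<lambda>(x1, x2). (- of_int B * x2, x1 - of_int A * x2))"

definition gmap :: "int \<Rightarrow> int \<Rightarrow> pt \<Rightarrow> pt" where
  "gmap A B = (\<lambda>v. Mmul A B v + ((of_int B - 1) / 2, 0))"

definition Dset :: "int \<Rightarrow> (pt \<Rightarrow> pt) set" where
  "Dset B = (if B \<ge> 3 then {gam k 0 0 | k. 0 \<le> k \<and> k \<le> B - 2} \<union> {cmap}
             else {id, cmap})"

definition Tset :: "int \<Rightarrow> int \<Rightarrow> pt set" where
  "Tset A B = (THE T. T \<noteq> {} \<and> compact T \<and>
                 gmap A B ` T = (\<Union>\<delta>\<in>Dset B. \<delta> ` T))"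

definition Tl :: "int \<Rightarrow> int \<Rightarrow> pt set" where
  "Tl A B = (THE T. T \<noteq> {} \<and> compact T \<and>
                 Mmul A B ` T = (\<Union>k\<in>{0..B-1}. (\<lambda>v. v + (of_int k, 0)) ` T))"

definition nbr :: "int \<Rightarrow> int \<Rightarrow> (pt \<Rightarrow> pt) set" where
  "nbr A B = {\<gamma> \<in> Gamma - {id}. Tset A B \<inter> \<gamma> ` Tset A B \<noteq> {}}"

definition nbr_l :: "int \<Rightarrow> int \<Rightarrow> (pt \<Rightarrow> pt) set" where
  "nbr_l A B = {gam p q 0 | p q. gam p q 0 \<noteq> id \<and> Tl A B \<inter> gam p q 0 ` Tl A B \<noteq> {}}"

end

theory Submission
  imports Defs
begin


lemma ifs_sub:
  fixes Q :: "pt \<Rightarrow> real" and f :: "'i \<Rightarrow> pt \<Rightarrow> pt"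
  assumes Qc: "continuous_on UNIV Q" and Q0: "\<And>z. Q z = 0 \<Longrightarrow> z = 0"
    and Qnn: "\<And>z. Q z \<ge> 0"
    and contr: "\<And>i x y. i \<in> I \<Longrightarrow> Q (f i x - f i y) \<le> l * Q (x - y)"
    and l: "l < 1" "0 \<le> l"
    and S: "compact S" "S \<noteq> {}" "S = (\<Union>i\<in>I. f i ` S)"
    and T: "compact T" "T \<noteq> {}" "T = (\<Union>i\<in>I. f i ` T)"
  shows "S \<subseteq> T"
proof -
  have "\<exists>t\<in>T. \<forall>t'\<in>T. Q (x - t) \<le> Q (x - t')" for x
  proof -
    have "continuous_on T (\<lambda>t. Q (x - t))"
      by (rule continuous_on_compose2[OF Qc]) (auto intro!: continuous_intros)
    thus ?thesis using continuous_attains_inf[OF T(1) T(2)] by blast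
  qed
  then obtain tt where tt: "\<And>x. tt x \<in> T" "\<And>x t'. t' \<in> T \<Longrightarrow> Q (x - tt x) \<le> Q (x - t')"
    by metis
  define h where "h x = Q (x - tt x)" for x
  obtain t0 where t0: "t0 \<in> T" using T(2) by blast
  have "compact ((\<lambda>x. Q (x - t0)) ` S)"
    by (rule compact_continuous_image[OF _ S(1)], rule continuous_on_compose2[OF Qc])
       (auto intro!: continuous_intros)
  then obtain C where C: "\<And>x. x \<in> S \<Longrightarrow> Q (x - t0) \<le> C"
    using compact_imp_bounded bounded_iff by (metis abs_le_D1 imageI real_norm_def)
  have bdd: "bdd_above (h ` S)"
    unfolding h_def by (rule bdd_aboveI2[where M=C]) (use tt(2)[OF t0] C in \<open>blast intro: order_trans\<close>)
  define D where "D = Sup (h ` S)"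
  have hD: "h x \<le> D" if "x \<in> S" for x
    unfolding D_def using bdd that by (simp add: cSup_upper)
  have "h x \<le> l * D" if "x \<in> S" for x
  proof -
    from that S(3) obtain i s where i: "i \<in> I" "s \<in> S" "x = f i s" by blast
    have "f i (tt s) \<in> T" using T(3) tt(1) i(1) by blast
    hence "h x \<le> Q (f i s - f i (tt s))" unfolding h_def using tt(2) i(3) by blast
    also have "\<dots> \<le> l * h s" unfolding h_def using contr[OF i(1)] .
    also have "\<dots> \<le> l * D" using hD[OF i(2)] l by (simp add: mult_left_mono)
    finally show ?thesis .
  qed
  hence "D \<le> l * D" unfolding D_def using S(2) by (intro cSup_least) auto
  moreover have "0 \<le> D"
  proof -
    obtain x0 where "x0 \<in> S" using S(2) by blast
    thus ?thesis using hD[of x0] Qnn[of "x0 - tt x0"] unfolding h_def by linarith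
  qed
  ultimately have "D = 0"
  proof -
    assume a: "D \<le> l * D" "0 \<le> D"
    show "D = 0"
    proof (rule ccontr)
      assume "D \<noteq> 0" hence "D > 0" using a by simp
      hence "l * D < 1 * D" using l by (intro mult_strict_right_mono) auto
      thus False using a by simp
    qed
  qed
  show ?thesis
  proof
    fix x assume "x \<in> S"
    hence "h x \<le> 0" using hD \<open>D = 0\<close> by auto
    hence "Q (x - tt x) = 0" unfolding h_def using Qnn by (meson antisym)
    hence "x - tt x = 0" by (rule Q0)
    hence "x = tt x" by simp
    thus "x \<in> T" by (metis tt(1))
  qed
qed

lemma ifs_exists:
  fixes f :: "'i \<Rightarrow> pt \<Rightarrow> pt"
  assumes I: "finite I" "I \<noteq> {}" and fc: "\<And>i. i \<in> I \<Longrightarrow> continuous_on UNIV (f i)"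
    and fi: "\<And>i. i \<in> I \<Longrightarrow> inj (f i)"
    and K: "compact K" "K \<noteq> {}" "\<And>i. i \<in> I \<Longrightarrow> f i ` K \<subseteq> K"
  shows "\<exists>T. T \<noteq> {} \<and> compact T \<and> T = (\<Union>i\<in>I. f i ` T)"
proof -
  define F where "F S = (\<Union>i\<in>I. f i ` S)" for S
  define Kn where "Kn n = (F ^^ n) K" for n
  have KnS: "Kn (Suc n) = F (Kn n)" for n by (simp add: Kn_def)
  have cpt: "compact (Kn n)" for n
  proof (induction n)
    case 0 thus ?case using K by (simp add: Kn_def)
  next
    case (Suc n) thus ?case unfolding KnS F_def
      using I(1) fc by (intro compact_UN) (auto intro: compact_continuous_image continuous_on_subset)
  qed
  have ne: "Kn n \<noteq> {}" for n
    by (induction n) (use K I in \<open>auto simp: Kn_def F_def\<close>)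
  have dec1: "Kn (Suc n) \<subseteq> Kn n" for n
  proof (induction n)
    case 0 thus ?case using K by (auto simp: Kn_def F_def)
  next
    case (Suc n) thus ?case unfolding KnS F_def by blast
  qed
  have dec: "m \<le> n \<Longrightarrow> Kn n \<subseteq> Kn m" for m n
    by (induction n rule: dec_induct) (use dec1 in auto)
  define T where "T = (\<Inter>n. Kn n)"
  have Tne: "T \<noteq> {}" unfolding T_def by (rule compact_nest[OF cpt ne dec])
  have Tc: "compact T" unfolding T_def by (rule compact_Inter) (use cpt in auto)
  have "F T = T"
  proof
    show "F T \<subseteq> T"
    proof
      fix y assume "y \<in> F T"
      then obtain i x where "i \<in> I" "x \<in> T" "y = f i x" unfolding F_def by blast
      hence "y \<in> Kn (Suc n)" for n unfolding KnS F_def T_def by blast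
      thus "y \<in> T" unfolding T_def using dec1 by blast
    qed
  next
    show "T \<subseteq> F T"
    proof
      fix y assume y: "y \<in> T"
      have "y \<in> Kn (Suc n)" for n using y unfolding T_def by blast
      hence "\<forall>n. \<exists>i\<in>I. y \<in> f i ` Kn n" unfolding KnS F_def by blast
      hence U: "UNIV = (\<Union>i\<in>I. {n. y \<in> f i ` Kn n})" by blast
      have "\<exists>i\<in>I. infinite {n. y \<in> f i ` Kn n}"
      proof (rule ccontr)
        assume "\<not> ?thesis"
        hence "finite (\<Union>i\<in>I. {n. y \<in> f i ` Kn n})" using I(1) by blast
        thus False using U by (metis infinite_UNIV_nat)
      qed
      then obtain i where i: "i \<in> I" "infinite {n. y \<in> f i ` Kn n}" by blast
      have ym: "y \<in> f i ` Kn m" for m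
      proof -
        obtain n where "n \<ge> m" "y \<in> f i ` Kn n" using i(2) unfolding infinite_nat_iff_unbounded_le by blast
        thus ?thesis using dec by blast
      qed
      then obtain x where x: "x \<in> Kn 0" "y = f i x" by blast
      have "x \<in> Kn m" for m
      proof -
        obtain z where "z \<in> Kn m" "y = f i z" using ym by blast
        thus ?thesis using fi[OF i(1)] x by (metis injD)
      qed
      hence "x \<in> T" unfolding T_def by blast
      thus "y \<in> F T" using x i unfolding F_def by blast
    qed
  qed
  thus ?thesis using Tne Tc unfolding F_def by metis
qed



lemma ifs_ball:
  fixes Q :: "pt \<Rightarrow> real" and f :: "'i \<Rightarrow> pt \<Rightarrow> pt"
  assumes I: "finite I" and Qc: "continuous_on UNIV Q"
    and coer: "\<And>z. c * (norm z)^2 \<le> Q z" and c: "c > 0" and Q0: "Q 0 = 0"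
    and young: "\<And>x y e. e > 0 \<Longrightarrow> Q (x + y) \<le> (1 + e) * Q x + (1 + 1/e) * Q y"
    and contr: "\<And>i x y. i \<in> I \<Longrightarrow> Q (f i x - f i y) \<le> l * Q (x - y)"
    and l: "l < 1" "0 < l"
  shows "\<exists>K. compact K \<and> K \<noteq> {} \<and> (\<forall>i\<in>I. f i ` K \<subseteq> K)"
proof -
  have Qnn: "Q z \<ge> 0" for z using coer[of z] c by (smt (verit) zero_le_mult_iff zero_le_power2)
  define e where "e = (1 - l) / (2 * l)"
  have e: "e > 0" using l by (simp add: e_def)
  define mu where "mu = (1 + e) * l"
  have mu: "mu = (1 + l) / 2" using l by (simp add: mu_def e_def field_simps)
  define E where "E = (\<Sum>i\<in>I. Q (f i 0))"
  have E: "i \<in> I \<Longrightarrow> Q (f i 0) \<le> E" for i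
    unfolding E_def using I Qnn by (intro member_le_sum) auto
  have E0: "E \<ge> 0" unfolding E_def using Qnn by (simp add: sum_nonneg)
  define R where "R = (1 + 1/e) * E / (1 - mu)"
  have R0: "R \<ge> 0" unfolding R_def using E0 e mu l by simp
  have inv: "Q (f i x) \<le> R" if i: "i \<in> I" and x: "Q x \<le> R" for i x
  proof -
    have "Q (f i x) = Q ((f i x - f i 0) + f i 0)" by simp
    also have "\<dots> \<le> (1 + e) * Q (f i x - f i 0) + (1 + 1/e) * Q (f i 0)" by (rule young[OF e])
    also have "\<dots> \<le> (1 + e) * (l * Q x) + (1 + 1/e) * E"
      using contr[OF i, of x 0] E[OF i] e by (intro add_mono mult_left_mono) auto
    also have "\<dots> \<le> mu * R + (1 + 1/e) * E"
      using x e l unfolding mu_def by (simp add: mult_left_mono)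
    also have "\<dots> = R"
      unfolding R_def using mu l e by (simp add: field_simps)
    finally show ?thesis .
  qed
  define K where "K = {z. Q z \<le> R}"
  have "closed K" unfolding K_def by (rule closed_Collect_le[OF Qc]) auto
  moreover have "bounded K"
    unfolding bounded_iff
  proof (intro exI ballI)
    fix z assume "z \<in> K"
    hence "c * (norm z)^2 \<le> R" using coer[of z] unfolding K_def by simp
    hence n2: "(norm z)^2 \<le> R / c" using c by (simp add: field_simps)
    show "norm z \<le> 1 + R / c"
    proof (cases "norm z \<le> 1")
      case True thus ?thesis using R0 c by (smt (verit) divide_nonneg_pos)
    next
      case False hence "norm z * 1 \<le> norm z * norm z" by (intro mult_left_mono) auto
      hence "norm z \<le> (norm z)^2" by (simp add: power2_eq_square)
      thus ?thesis using n2 by simp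
    qed
  qed
  ultimately have "compact K" by (simp add: compact_eq_bounded_closed)
  moreover have "0 \<in> K" unfolding K_def using Q0 R0 by simp
  ultimately show ?thesis using inv unfolding K_def by blast
qed



definition Qf :: "int \<Rightarrow> int \<Rightarrow> pt \<Rightarrow> real" where
  "Qf A B z = of_int B * (fst z)^2 - 2 * of_int A * fst z * snd z + (of_int B + 1) * (snd z)^2"

definition Minv :: "int \<Rightarrow> int \<Rightarrow> pt \<Rightarrow> pt" where
  "Minv A B z = (snd z - of_int A * fst z / of_int B, - fst z / of_int B)"

definition tr :: "int \<Rightarrow> pt \<Rightarrow> pt" where "tr k = (\<lambda>z. z + (of_int k, 0))"

lemma norm_sq_pt: "(norm (z::pt))^2 = (fst z)^2 + (snd z)^2"
  by (cases z) (simp add: norm_Pair)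

lemma Qf_cont: "continuous_on UNIV (Qf A B)"
  unfolding Qf_def by (intro continuous_intros)

lemma Qf_0: "Qf A B 0 = 0" by (simp add: Qf_def)

lemma Qf_neg: "Qf A B (- z) = Qf A B z" by (simp add: Qf_def)

context
  fixes A B :: int
  assumes AB: "-1 \<le> A" "A \<le> B" "2 \<le> B"
begin

lemma a2b2: "(real_of_int A)^2 \<le> (real_of_int B)^2"
proof -
  have "\<bar>real_of_int A\<bar> \<le> real_of_int B" using AB by linarith
  thus ?thesis by (metis abs_le_square_iff abs_of_nonneg order_trans abs_ge_zero)
qed

lemma Qf_coer: "(1/3) * (norm z)^2 \<le> Qf A B z"
proof -
  obtain u v where z: "z = (u, v)" by (cases z)
  define a where "a = real_of_int A"
  define b where "b = real_of_int B"
  have b2: "b \<ge> 2" using AB unfolding b_def by simp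
  have ab: "a^2 \<le> b^2" using a2b2 unfolding a_def b_def .
  have id: "(b + 2/3) * (Qf A B z - (1/3) * (norm z)^2) =
      ((b + 2/3) * v - a * u)^2 + ((b - 1/3) * (b + 2/3) - a^2) * u^2"
    unfolding z Qf_def norm_sq_pt a_def b_def by (simp add: power2_eq_square field_simps)
  have "(b - 1/3) * (b + 2/3) - a^2 = (b^2 - a^2) + (b/3 - 2/9)" by (simp add: power2_eq_square field_simps)
  hence "(b - 1/3) * (b + 2/3) - a^2 \<ge> 0" using ab b2 by linarith
  hence "((b + 2/3) * v - a * u)^2 + ((b - 1/3) * (b + 2/3) - a^2) * u^2 \<ge> 0" by simp
  hence "(b + 2/3) * (Qf A B z - (1/3) * (norm z)^2) \<ge> 0" using id by simp
  thus ?thesis using b2 by (simp add: zero_le_mult_iff)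
qed

lemma Qf_nn: "Qf A B z \<ge> 0"
  using Qf_coer[of z] zero_le_power2[of "norm z"] by linarith

lemma Qf_zero: "Qf A B z = 0 \<Longrightarrow> z = 0"
  using Qf_coer[of z] by simp

lemma Qf_upper: "Qf A B z \<le> (2 * of_int B + 1) * (norm z)^2"
proof -
  obtain u v where z: "z = (u, v)" by (cases z)
  define a where "a = real_of_int A"
  define b where "b = real_of_int B"
  have b2: "b \<ge> 2" "a \<ge> -1" "a \<le> b" using AB unfolding a_def b_def by auto
  have id: "(2 * b + 1) * (norm z)^2 - Qf A B z = (b+1) * u^2 + 2 * a * u * v + b * v^2"
    unfolding z Qf_def norm_sq_pt a_def b_def by (simp add: power2_eq_square algebra_simps)
  have "(b+1) * u^2 + 2 * a * u * v + b * v^2 \<ge> 0"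
  proof (cases "a \<ge> 0")
    case True
    have "(b+1) * u^2 + 2 * a * u * v + b * v^2 = a * (u + v)^2 + (b + 1 - a) * u^2 + (b - a) * v^2"
      by (simp add: power2_eq_square algebra_simps)
    also have "\<dots> \<ge> 0" using True b2 by (intro add_nonneg_nonneg mult_nonneg_nonneg) auto
    finally show ?thesis .
  next
    case False
    have "(b+1) * u^2 + 2 * a * u * v + b * v^2 = (- a) * (u - v)^2 + (b + 1 + a) * u^2 + (b + a) * v^2"
      by (simp add: power2_eq_square algebra_simps)
    also have "\<dots> \<ge> 0"
    proof -
      have "(- a) * (u - v)^2 \<ge> 0" using False by (intro mult_nonneg_nonneg) auto
      moreover have "(b + 1 + a) * u^2 \<ge> 0" using b2 by simp
      moreover have "(b + a) * v^2 \<ge> 0" using b2 by simp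
      ultimately show ?thesis by linarith
    qed
    finally show ?thesis .
  qed
  thus ?thesis using id unfolding b_def by linarith
qed

lemma Qf_M: "Qf A B (Mmul A B y) \<ge> Qf A B y + (norm y)^2"
proof -
  obtain u v where z: "y = (u, v)" by (cases y)
  define a where "a = real_of_int A"
  define b where "b = real_of_int B"
  have b2: "b \<ge> 2" "a \<ge> -1" "a \<le> b" using AB unfolding a_def b_def by auto
  have ab: "a^2 \<le> b^2" using a2b2 unfolding a_def b_def .
  have id: "Qf A B (Mmul A B y) - Qf A B y - (norm y)^2 = (b^3 - a^2 * b + a^2 - b - 2) * v^2"
    unfolding z Qf_def Mmul_def norm_sq_pt a_def b_def
    by (simp add: power2_eq_square power3_eq_cube algebra_simps)
  have "b^3 - a^2 * b + a^2 - b - 2 = b^3 - a^2 * (b - 1) - b - 2" by (simp add: algebra_simps)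
  also have "\<dots> \<ge> b^3 - b^2 * (b - 1) - b - 2" using ab b2 by (simp add: mult_right_mono)
  also have "b^3 - b^2 * (b - 1) - b - 2 = (b - 2) * (b + 1)"
    by (simp add: power2_eq_square power3_eq_cube algebra_simps)
  also have "\<dots> \<ge> 0" using b2 by simp
  finally have "(b^3 - a^2 * b + a^2 - b - 2) * v^2 \<ge> 0" by simp
  thus ?thesis using id by linarith
qed

lemma Mmul_Minv: "Mmul A B (Minv A B z) = z"
  using AB by (cases z) (simp add: Mmul_def Minv_def field_simps)

lemma Minv_Mmul: "Minv A B (Mmul A B z) = z"
  using AB by (cases z) (simp add: Mmul_def Minv_def field_simps)

lemma Minv_diff: "Minv A B (x - y) = Minv A B x - Minv A B y"
  by (cases x, cases y) (simp add: Minv_def diff_divide_distrib add_divide_distrib algebra_simps)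

lemma Minv_add: "Minv A B (x + y) = Minv A B x + Minv A B y"
  by (cases x, cases y) (simp add: Minv_def diff_divide_distrib add_divide_distrib algebra_simps)

lemma Minv_neg: "Minv A B (- x) = - Minv A B x"
  by (cases x) (simp add: Minv_def diff_divide_distrib add_divide_distrib algebra_simps)

lemma Mmul_diff: "Mmul A B (x - y) = Mmul A B x - Mmul A B y"
  by (cases x, cases y) (simp add: Mmul_def field_simps)

lemma Mmul_neg: "Mmul A B (- x) = - Mmul A B x"
  by (cases x) (simp add: Mmul_def field_simps)

definition "lam = (2 * real_of_int B + 1) / (2 * real_of_int B + 2)"

lemma lam: "0 < lam" "lam < 1" using AB by (auto simp: lam_def field_simps)

lemma Qf_Minv: "Qf A B (Minv A B w) \<le> lam * Qf A B w"
proof -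
  define y where "y = Minv A B w"
  have w: "w = Mmul A B y" unfolding y_def by (simp add: Mmul_Minv)
  have b: "real_of_int B \<ge> 2" using AB by simp
  have "Qf A B y \<le> (2 * of_int B + 1) * (norm y)^2" by (rule Qf_upper)
  hence "(norm y)^2 \<ge> Qf A B y / (2 * of_int B + 1)" using b by (simp add: field_simps)
  hence "Qf A B w \<ge> Qf A B y + Qf A B y / (2 * of_int B + 1)" using Qf_M[of y] w by simp
  hence "Qf A B w \<ge> Qf A B y * ((2 * of_int B + 2) / (2 * of_int B + 1))"
    using b by (simp add: field_simps)
  hence "Qf A B y \<le> lam * Qf A B w" using b unfolding lam_def by (simp add: field_simps)
  thus ?thesis unfolding y_def .
qed

lemma Qf_young: "e > 0 \<Longrightarrow> Qf A B (x + y) \<le> (1 + e) * Qf A B x + (1 + 1/e) * Qf A B y"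
proof -
  assume e: "e > 0"
  have id: "(1 + e) * Qf A B x + (1 + 1/e) * Qf A B y - Qf A B (x + y) = Qf A B (e *\<^sub>R x - y) / e"
    using e by (cases x, cases y) (simp add: Qf_def power2_eq_square field_simps)
  have "Qf A B (e *\<^sub>R x - y) / e \<ge> 0" using Qf_nn e by simp
  thus ?thesis using id by linarith
qed

end


definition ginv :: "int \<Rightarrow> int \<Rightarrow> pt \<Rightarrow> pt" where
  "ginv A B z = Minv A B (z - ((of_int B - 1) / 2, 0))"

lemma gam_tr: "gam k 0 0 = tr k"
  by (rule ext, case_tac x) (simp add: gam_def tr_def)

lemma cmap_neg: "cmap = uminus"
  by (rule ext, case_tac x) (simp add: cmap_def)

lemma tr0: "tr 0 = id" by (rule ext) (simp add: tr_def zero_prod_def)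

lemma Dset_eq: assumes "B \<ge> 2" shows "Dset B = tr ` {0..B-2} \<union> {cmap}"
proof (cases "B \<ge> 3")
  case True thus ?thesis unfolding Dset_def by (auto simp: gam_tr)
next
  case False hence "B = 2" using assms by simp
  thus ?thesis unfolding Dset_def by (auto simp: tr0)
qed

lemma cont_Minv: "continuous_on UNIV (Minv A B)"
  unfolding Minv_def divide_inverse by (intro continuous_intros)

lemma cont_ginv: "continuous_on UNIV (ginv A B)"
  unfolding ginv_def Minv_def divide_inverse by (intro continuous_intros)

lemma cont_tr: "continuous_on UNIV (tr k)" unfolding tr_def by (intro continuous_intros)
lemma inj_tr: "inj (tr k)" unfolding tr_def by (rule injI) simp
lemma tr_diff: "tr k x - tr k y = x - y" by (simp add: tr_def)

context
  fixes A B :: int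
  assumes AB: "-1 \<le> A" "A \<le> B" "2 \<le> B"
begin

lemma gmap_ginv: "gmap A B (ginv A B z) = z"
  unfolding gmap_def ginv_def using Mmul_Minv[OF AB] by simp

lemma ginv_gmap: "ginv A B (gmap A B z) = z"
  unfolding gmap_def ginv_def using Minv_Mmul[OF AB] by simp

lemma inj_ginv: "inj (ginv A B)"
  by (metis gmap_ginv injI)

lemma ginv_diff: "ginv A B x - ginv A B y = Minv A B (x - y)"
  unfolding ginv_def using Minv_diff[OF AB] by (metis diff_diff_eq2 add_diff_cancel_left' diff_add_cancel
     cancel_ab_semigroup_add_class.diff_right_commute)

lemma D_cases: "\<delta> \<in> Dset B \<Longrightarrow> (\<exists>k. \<delta> = tr k) \<or> \<delta> = uminus"
  using Dset_eq[OF AB(3)] cmap_neg by auto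

lemma D_contr: "\<delta> \<in> Dset B \<Longrightarrow>
   Qf A B ((ginv A B \<circ> \<delta>) x - (ginv A B \<circ> \<delta>) y) \<le> lam B * Qf A B (x - y)"
proof -
  assume d: "\<delta> \<in> Dset B"
  have "Qf A B ((ginv A B \<circ> \<delta>) x - (ginv A B \<circ> \<delta>) y) = Qf A B (Minv A B (x - y))"
    using D_cases[OF d]
  proof
    assume "\<exists>k. \<delta> = tr k" then obtain k where "\<delta> = tr k" by blast
    thus ?thesis by (simp add: ginv_diff tr_diff)
  next
    assume "\<delta> = uminus"
    hence "(ginv A B \<circ> \<delta>) x - (ginv A B \<circ> \<delta>) y = Minv A B (- (x - y))"
      by (simp add: ginv_diff)
    hence "(ginv A B \<circ> \<delta>) x - (ginv A B \<circ> \<delta>) y = - Minv A B (x - y)"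
      using Minv_neg[OF AB, of "x - y"] by (simp del: minus_diff_eq)
    thus ?thesis by (simp add: Qf_neg)
  qed
  also have "\<dots> \<le> lam B * Qf A B (x - y)" by (rule Qf_Minv[OF AB])
  finally show ?thesis .
qed

lemma L_contr: "Qf A B ((Minv A B \<circ> tr k) x - (Minv A B \<circ> tr k) y) \<le> lam B * Qf A B (x - y)"
  using Qf_Minv[OF AB] Minv_diff[OF AB, symmetric] by (simp add: tr_diff)

lemma D_fin: "finite (Dset B)" "Dset B \<noteq> {}" using Dset_eq[OF AB(3)] by auto

lemma Teq_iff: "gmap A B ` S = (\<Union>\<delta>\<in>Dset B. \<delta> ` S) \<longleftrightarrow> S = (\<Union>\<delta>\<in>Dset B. (ginv A B \<circ> \<delta>) ` S)"
proof
  assume h: "gmap A B ` S = (\<Union>\<delta>\<in>Dset B. \<delta> ` S)"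
  have "S = ginv A B ` gmap A B ` S" by (simp add: image_image ginv_gmap)
  also have "\<dots> = (\<Union>\<delta>\<in>Dset B. (ginv A B \<circ> \<delta>) ` S)" unfolding h by (simp add: image_UN image_comp)
  finally show "S = (\<Union>\<delta>\<in>Dset B. (ginv A B \<circ> \<delta>) ` S)" .
next
  assume h: "S = (\<Union>\<delta>\<in>Dset B. (ginv A B \<circ> \<delta>) ` S)"
  have "gmap A B ` S = gmap A B ` (\<Union>\<delta>\<in>Dset B. (ginv A B \<circ> \<delta>) ` S)" using h by simp
  also have "\<dots> = (\<Union>\<delta>\<in>Dset B. \<delta> ` S)" by (simp add: image_UN image_image gmap_ginv)
  finally show "gmap A B ` S = (\<Union>\<delta>\<in>Dset B. \<delta> ` S)" .
qed

lemma Leq_iff: "Mmul A B ` S = (\<Union>k\<in>{0..B-1}. (\<lambda>v. v + (of_int k, 0)) ` S) \<longleftrightarrow>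
   S = (\<Union>k\<in>{0..B-1}. (Minv A B \<circ> tr k) ` S)"
proof
  assume h: "Mmul A B ` S = (\<Union>k\<in>{0..B-1}. (\<lambda>v. v + (of_int k, 0)) ` S)"
  have "S = Minv A B ` Mmul A B ` S" by (simp add: image_image Minv_Mmul[OF AB])
  also have "\<dots> = (\<Union>k\<in>{0..B-1}. (Minv A B \<circ> tr k) ` S)" unfolding h
    by (simp add: image_UN image_comp tr_def)
  finally show "S = (\<Union>k\<in>{0..B-1}. (Minv A B \<circ> tr k) ` S)" .
next
  assume h: "S = (\<Union>k\<in>{0..B-1}. (Minv A B \<circ> tr k) ` S)"
  have "Mmul A B ` S = Mmul A B ` (\<Union>k\<in>{0..B-1}. (Minv A B \<circ> tr k) ` S)" using h by simp
  also have "\<dots> = (\<Union>k\<in>{0..B-1}. (\<lambda>v. v + (of_int k, 0)) ` S)"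
    by (simp add: image_UN image_image Mmul_Minv[OF AB] tr_def)
  finally show "Mmul A B ` S = (\<Union>k\<in>{0..B-1}. (\<lambda>v. v + (of_int k, 0)) ` S)" .
qed

lemma T_exists: "\<exists>!T. T \<noteq> {} \<and> compact T \<and> gmap A B ` T = (\<Union>\<delta>\<in>Dset B. \<delta> ` T)"
proof -
  let ?f = "\<lambda>\<delta>. ginv A B \<circ> \<delta>"
  have lam: "lam B < 1" "0 < lam B" using lam[OF AB] by auto
  have "\<exists>K. compact K \<and> K \<noteq> {} \<and> (\<forall>i\<in>Dset B. ?f i ` K \<subseteq> K)"
    by (rule ifs_ball[where f="?f" and c="1/3" and Q="Qf A B" and l="lam B"])
       (use D_fin Qf_cont Qf_coer[OF AB] Qf_0 Qf_young[OF AB] D_contr lam in auto)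
  then obtain K where K: "compact K" "K \<noteq> {}" "\<forall>i\<in>Dset B. ?f i ` K \<subseteq> K" by blast
  have fc: "continuous_on UNIV (?f \<delta>)" if "\<delta> \<in> Dset B" for \<delta>
    using D_cases[OF that]
  proof
    assume "\<exists>k. \<delta> = tr k" then obtain k where "\<delta> = tr k" by blast
    thus ?thesis using continuous_on_compose[OF cont_tr continuous_on_subset[OF cont_ginv subset_UNIV]] by simp
  next
    assume "\<delta> = uminus"
    thus ?thesis
      using continuous_on_compose[OF continuous_on_minus[OF continuous_on_id] continuous_on_subset[OF cont_ginv subset_UNIV]] by simp
  qed
  have fi: "inj (?f \<delta>)" if "\<delta> \<in> Dset B" for \<delta>
    using D_cases[OF that]
  proof
    assume "\<exists>k. \<delta> = tr k" then obtain k where "\<delta> = tr k" by blast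
    thus ?thesis using inj_tr inj_ginv by (simp add: inj_compose)
  next
    assume "\<delta> = uminus"
    have "inj (uminus :: pt \<Rightarrow> pt)" by (rule injI) simp
    thus ?thesis using inj_ginv \<open>\<delta> = uminus\<close> by (simp add: inj_compose)
  qed
  obtain T where T: "T \<noteq> {}" "compact T" "T = (\<Union>\<delta>\<in>Dset B. ?f \<delta> ` T)"
  proof -
    have K3: "\<And>i. i \<in> Dset B \<Longrightarrow> ?f i ` K \<subseteq> K" using K(3) by blast
    show ?thesis using ifs_exists[where f="?f", OF D_fin fc fi K(1,2) K3] that by blast
  qed
  show ?thesis
  proof (rule ex1I[of _ T])
    show "T \<noteq> {} \<and> compact T \<and> gmap A B ` T = (\<Union>\<delta>\<in>Dset B. \<delta> ` T)" using T Teq_iff by blast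
  next
    fix S assume S: "S \<noteq> {} \<and> compact S \<and> gmap A B ` S = (\<Union>\<delta>\<in>Dset B. \<delta> ` S)"
    hence S': "S = (\<Union>\<delta>\<in>Dset B. ?f \<delta> ` S)" using Teq_iff by blast
    have "S \<subseteq> T" by (rule ifs_sub[where f="?f", OF Qf_cont Qf_zero[OF AB] Qf_nn[OF AB] D_contr lam(1) _ _ _ S' T(2) T(1) T(3)])
                       (use lam S in auto)
    moreover have "T \<subseteq> S" by (rule ifs_sub[where f="?f", OF Qf_cont Qf_zero[OF AB] Qf_nn[OF AB] D_contr lam(1) _ T(2) T(1) T(3) _ _ S'])
                       (use lam S in auto)
    ultimately show "S = T" by blast
  qed
qed

lemma Tset_prop: "Tset A B \<noteq> {}" "compact (Tset A B)"
   "gmap A B ` Tset A B = (\<Union>\<delta>\<in>Dset B. \<delta> ` Tset A B)"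
  using theI'[OF T_exists] unfolding Tset_def by auto

lemma L_unique:
  assumes W: "W \<noteq> {}" "compact W" "Mmul A B ` W = (\<Union>k\<in>{0..B-1}. (\<lambda>v. v + (of_int k, 0)) ` W)"
  shows "Tl A B = W"
  unfolding Tl_def
proof (rule the_equality)
  show "W \<noteq> {} \<and> compact W \<and> Mmul A B ` W = (\<Union>k\<in>{0..B-1}. (\<lambda>v. v + (of_int k, 0)) ` W)"
    using W by blast
next
  have lam: "lam B < 1" "0 \<le> lam B" using lam[OF AB] by auto
  have W': "W = (\<Union>k\<in>{0..B-1}. (Minv A B \<circ> tr k) ` W)" using W(3) Leq_iff by blast
  fix S assume S: "S \<noteq> {} \<and> compact S \<and> Mmul A B ` S = (\<Union>k\<in>{0..B-1}. (\<lambda>v. v + (of_int k, 0)) ` S)"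
  hence S': "S = (\<Union>k\<in>{0..B-1}. (Minv A B \<circ> tr k) ` S)" using Leq_iff by blast
  have "S \<subseteq> W" by (rule ifs_sub[where f="\<lambda>k. Minv A B \<circ> tr k", OF Qf_cont Qf_zero[OF AB] Qf_nn[OF AB] L_contr lam(1) lam(2) _ _ S' W(2) W(1) W'])
                     (use S in auto)
  moreover have "W \<subseteq> S" by (rule ifs_sub[where f="\<lambda>k. Minv A B \<circ> tr k", OF Qf_cont Qf_zero[OF AB] Qf_nn[OF AB] L_contr lam(1) lam(2) W(2) W(1) W' _ _ S'])
                     (use S in auto)
  ultimately show "S = W" by blast
qed

end


lemma tr_apply: "tr k z = z + (of_int k, 0)" by (simp add: tr_def)

context
  fixes A B :: int
  assumes AB: "-1 \<le> A" "A \<le> B" "2 \<le> B"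
begin

lemma gmap_neg: "gmap A B (- x) = (of_int (B - 1), 0) - gmap A B x"
  by (cases x) (simp add: gmap_def Mmul_def field_simps)

lemma U_eq:
  fixes T :: "pt set"
  assumes gT: "gmap A B ` T = (\<Union>k\<in>{0..B-2}. tr k ` T) \<union> uminus ` T"
  shows "gmap A B ` (T \<union> uminus ` T) = (\<Union>k\<in>{0..B-1}. tr k ` (T \<union> uminus ` T))"
proof
  show "gmap A B ` (T \<union> uminus ` T) \<subseteq> (\<Union>k\<in>{0..B-1}. tr k ` (T \<union> uminus ` T))"
  proof
    fix z assume "z \<in> gmap A B ` (T \<union> uminus ` T)"
    then obtain t where t: "t \<in> T" "z = gmap A B t \<or> z = gmap A B (- t)" by blast
    have "gmap A B t \<in> gmap A B ` T" using t by blast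
    hence "(\<exists>k\<in>{0..B-2}. \<exists>t'\<in>T. gmap A B t = tr k t') \<or> (\<exists>t'\<in>T. gmap A B t = - t')"
      unfolding gT by blast
    thus "z \<in> (\<Union>k\<in>{0..B-1}. tr k ` (T \<union> uminus ` T))"
    proof
      assume "\<exists>k\<in>{0..B-2}. \<exists>t'\<in>T. gmap A B t = tr k t'"
      then obtain k t' where k: "k \<in> {0..B-2}" "t' \<in> T" "gmap A B t = tr k t'" by blast
      show ?thesis using t(2)
      proof
        assume "z = gmap A B t"
        hence "z = tr k t'" using k by simp
        moreover have "k \<in> {0..B-1}" using k by simp
        ultimately show ?thesis using k by blast
      next
        assume "z = gmap A B (- t)"
        hence "z = tr (B - 1 - k) (- t')" using k by (cases t') (simp add: gmap_neg tr_apply)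
        moreover have "B - 1 - k \<in> {0..B-1}" using k by simp
        ultimately show ?thesis using k by blast
      qed
    next
      assume "\<exists>t'\<in>T. gmap A B t = - t'"
      then obtain t' where k: "t' \<in> T" "gmap A B t = - t'" by blast
      show ?thesis using t(2)
      proof
        assume "z = gmap A B t"
        hence "z = tr 0 (- t')" using k by (simp add: tr0)
        moreover have "(0::int) \<in> {0..B-1}" using AB by simp
        ultimately show ?thesis using k by blast
      next
        assume "z = gmap A B (- t)"
        hence "z = tr (B - 1) t'" using k by (cases t') (simp add: gmap_neg tr_apply)
        moreover have "B - 1 \<in> {0..B-1}" using AB by simp
        ultimately show ?thesis using k by blast
      qed
    qed
  qed
next
  show "(\<Union>k\<in>{0..B-1}. tr k ` (T \<union> uminus ` T)) \<subseteq> gmap A B ` (T \<union> uminus ` T)"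
  proof
    fix z assume "z \<in> (\<Union>k\<in>{0..B-1}. tr k ` (T \<union> uminus ` T))"
    then obtain k t where k: "k \<in> {0..B-1}" "t \<in> T" "z = tr k t \<or> z = tr k (- t)" by blast
    have inT: "w \<in> gmap A B ` T \<Longrightarrow> w \<in> gmap A B ` (T \<union> uminus ` T)" for w by blast
    have inN: "w \<in> gmap A B ` T \<Longrightarrow> (of_int (B - 1), 0) - w \<in> gmap A B ` (T \<union> uminus ` T)" for w
    proof -
      assume "w \<in> gmap A B ` T"
      then obtain s where "s \<in> T" "w = gmap A B s" by blast
      hence "(of_int (B - 1), 0) - w = gmap A B (- s)" "- s \<in> T \<union> uminus ` T"
        by (auto simp: gmap_neg)
      thus ?thesis by blast
    qed
    show "z \<in> gmap A B ` (T \<union> uminus ` T)" using k(3)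
    proof
      assume z: "z = tr k t"
      show ?thesis
      proof (cases "k \<le> B - 2")
        case True
        hence "z \<in> gmap A B ` T" unfolding gT using k z by auto
        thus ?thesis by (rule inT)
      next
        case False hence kk: "k = B - 1" using k by simp
        have "- t \<in> gmap A B ` T" unfolding gT using k by blast
        have "z = (of_int (B - 1), 0) - (- t)" using z kk by (simp add: tr_apply)
        with inN[OF \<open>- t \<in> gmap A B ` T\<close>] show ?thesis by simp
      qed
    next
      assume z: "z = tr k (- t)"
      show ?thesis
      proof (cases "k = 0")
        case True
        hence "z = - t" using z by (simp add: tr0)
        hence "z \<in> gmap A B ` T" unfolding gT using k(2) by blast
        thus ?thesis by (rule inT)
      next
        case False
        hence "B - 1 - k \<in> {0..B-2}" using k by simp
        hence "tr (B - 1 - k) t \<in> gmap A B ` T" unfolding gT using k by blast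
        have "z = (of_int (B - 1), 0) - tr (B - 1 - k) t" using z by (cases t) (simp add: tr_apply)
        with inN[OF \<open>tr (B - 1 - k) t \<in> gmap A B ` T\<close>] show ?thesis by simp
      qed
    qed
  qed
qed

definition "vv = (let v2 = ((of_int B - 1) / 2) / (1 + of_int A + of_int B) in ((1 + of_int A) * v2, v2))"

lemma vv_fix: "Mmul A B vv + ((of_int B - 1) / 2, 0) = vv"
proof -
  define a where "a = real_of_int A"
  define b where "b = real_of_int B"
  define d where "d = (b - 1) / 2"
  define D where "D = 1 + a + b"
  have D: "D > 0" using AB unfolding D_def a_def b_def by linarith
  have vv: "vv = ((1 + a) * (d / D), d / D)" unfolding vv_def Let_def a_def b_def d_def D_def by simp
  have e1: "- (b * (d / D)) + d = (1 + a) * (d / D)"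
    using D unfolding D_def by (simp add: field_simps)
  have e2: "(1 + a) * (d / D) - a * (d / D) = d / D" using D by (simp add: field_simps)
  show ?thesis unfolding vv Mmul_def using e1 e2 by (simp add: a_def b_def d_def)
qed

lemma Mmul_shift: "Mmul A B (x - vv) = gmap A B x - vv"
proof -
  have mv: "Mmul A B vv = vv - ((of_int B - 1) / 2, 0)" using vv_fix by (metis add_diff_cancel_right')
  have "Mmul A B (x - vv) = Mmul A B x - Mmul A B vv" by (rule Mmul_diff[OF AB])
  also have "\<dots> = gmap A B x - vv" unfolding gmap_def mv by (simp add: algebra_simps)
  finally show ?thesis .
qed

lemma Tl_eq: "Tl A B = (\<lambda>z. z - vv) ` (Tset A B \<union> uminus ` Tset A B)"
proof (rule L_unique[OF AB])
  let ?T = "Tset A B"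
  let ?U = "?T \<union> uminus ` ?T"
  show "(\<lambda>z. z - vv) ` ?U \<noteq> {}" using Tset_prop[OF AB] by auto
  have cT: "compact ?T" by (rule Tset_prop(2)[OF AB])
  have "compact (uminus ` ?T)" using compact_negations[OF cT] by simp
  hence "compact ?U" using cT by (intro compact_Un)
  thus "compact ((\<lambda>z. z - vv) ` ?U)" by (rule compact_continuous_image[rotated]) (intro continuous_intros)
  have gT: "gmap A B ` ?T = (\<Union>k\<in>{0..B-2}. tr k ` ?T) \<union> uminus ` ?T"
    using Tset_prop(3)[OF AB] Dset_eq[OF AB(3)] cmap_neg by auto
  have "Mmul A B ` (\<lambda>z. z - vv) ` ?U = (\<lambda>z. z - vv) ` gmap A B ` ?U"
    by (simp add: image_image Mmul_shift)
  also have "\<dots> = (\<lambda>z. z - vv) ` (\<Union>k\<in>{0..B-1}. tr k ` ?U)" by (simp only: U_eq[OF gT])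
  also have "\<dots> = (\<Union>k\<in>{0..B-1}. (\<lambda>v. v + (of_int k, 0)) ` (\<lambda>z. z - vv) ` ?U)"
    by (simp add: image_UN image_image tr_def algebra_simps)
  finally show "Mmul A B ` (\<lambda>z. z - vv) ` ?U = (\<Union>k\<in>{0..B-1}. (\<lambda>v. v + (of_int k, 0)) ` (\<lambda>z. z - vv) ` ?U)" .
qed

end

lemma gam0: "gam p q 0 = (\<lambda>z. z + (of_int p, of_int q))"
  by (rule ext, case_tac z) (simp add: gam_def)

lemma gam1: "gam p q 1 = gam p q 0 \<circ> cmap"
  by (rule ext, case_tac x) (simp add: gam_def cmap_def)

lemma gam0_id: "gam p q 0 = id \<longleftrightarrow> p = 0 \<and> q = 0"
proof
  assume "gam p q 0 = id"
  hence "gam p q 0 (0, 0) = (0, 0)" by simp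
  thus "p = 0 \<and> q = 0" by (simp add: gam_def)
qed (simp add: gam0 zero_prod_def[symmetric] id_def)

theorem lemma3p2:
  fixes A B :: int
  assumes "-1 \<le> A" and "A \<le> B" and "B \<ge> 2" and "2 * A < B + 3"
  shows "nbr A B \<subseteq> nbr_l A B \<union> {cmap} \<union> {s \<circ> cmap | s. s \<in> nbr_l A B}"
proof
  have AB: "-1 \<le> A" "A \<le> B" "2 \<le> B" using assms by auto
  let ?T = "Tset A B"
  let ?U = "?T \<union> uminus ` ?T"
  have key: "gam p q 0 \<in> nbr_l A B"
    if pq: "\<not> (p = 0 \<and> q = 0)" and xy: "x \<in> ?U" "y \<in> ?U" "x = y + (of_int p, of_int q)" for p q x y
  proof -
    have "x - vv A B \<in> Tl A B" "y - vv A B \<in> Tl A B" using xy Tl_eq[OF AB] by blast+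
    moreover have "x - vv A B = gam p q 0 (y - vv A B)" using xy(3) by (simp add: gam0 algebra_simps)
    ultimately have "Tl A B \<inter> gam p q 0 ` Tl A B \<noteq> {}" by blast
    thus ?thesis unfolding nbr_l_def using pq gam0_id by blast
  qed
  fix g assume "g \<in> nbr A B"
  hence g: "g \<in> Gamma" "g \<noteq> id" "?T \<inter> g ` ?T \<noteq> {}" unfolding nbr_def by auto
  then obtain p q r where pqr: "g = gam p q r" "r \<in> {0, 1}" unfolding Gamma_def by blast
  obtain z t where zt: "z \<in> ?T" "t \<in> ?T" "z = g t" using g(3) by blast
  show "g \<in> nbr_l A B \<union> {cmap} \<union> {s \<circ> cmap | s. s \<in> nbr_l A B}"
  proof (cases "r = 0")
    case True
    hence gg: "g = gam p q 0" using pqr by simp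
    hence "\<not> (p = 0 \<and> q = 0)" using g(2) gam0_id by blast
    moreover have "z = t + (of_int p, of_int q)" using zt(3) gg by (simp add: gam0)
    ultimately have "gam p q 0 \<in> nbr_l A B" using key[of p q z t] zt by blast
    thus ?thesis using gg by blast
  next
    case False
    hence gg: "g = gam p q 0 \<circ> cmap" using pqr gam1 by auto
    show ?thesis
    proof (cases "p = 0 \<and> q = 0")
      case True
      hence "gam p q 0 = id" using gam0_id by blast
      hence "g = cmap" using gg by simp
      thus ?thesis by blast
    next
      case False
      have "z = - t + (of_int p, of_int q)" using zt(3) gg by (simp add: gam0 cmap_neg)
      moreover have "- t \<in> ?U" using zt(2) by blast
      ultimately have "gam p q 0 \<in> nbr_l A B" using key[OF False, of z "- t"] zt by blast
      thus ?thesis using gg by blast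
    qed
  qed
qed


end
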